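(* Let $X$ be an SL-space with spatial part $Y$, and let $U\subseteq X$. Then $U$ is a clopen Scott upset of $X$ if and only if there is a compact open subset $V$ of $Y$ such that $\mathrm{cl}\,V=U$ (closure taken in $X$).
   Context: A Priestley space is a Stone space $X$ with a partial order such that clopen upsets separate points. An L-space is a Priestley space in which the downset of each clopen set is clopen and the closure of each open upset is open. The spatial part of $X$ is $Y=\{y\in X\mid{\downarrow}y\text{ is clopen}\}$, topologized by declaring $V\subseteq Y$ open iff $V=U\cap Y$ for some clopen upset $U$ of $X$. $X$ is an SL-space if $Y$ is dense in $X$. A Scott upset of $X$ is a closed upset $F$ with $\min F\subseteq Y$. *)

theory Defs
  imports "HOL-Analysis.Analysis"
begin

definition clopenin :: "'a topology \<Rightarrow> 'a set \<Rightarrow> bool" where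
  "clopenin X S \<longleftrightarrow> openin X S \<and> closedin X S"

definition stone_space :: "'a topology \<Rightarrow> bool" where
  "stone_space X \<longleftrightarrow> compact_space X \<and> Hausdorff_space X \<and>
     (\<forall>S. connectedin X S \<longrightarrow> (\<forall>x\<in>S. \<forall>y\<in>S. x = y))"

definition upset_in :: "'a topology \<Rightarrow> ('a \<Rightarrow> 'a \<Rightarrow> bool) \<Rightarrow> 'a set \<Rightarrow> bool" where
  "upset_in X le S \<longleftrightarrow> S \<subseteq> topspace X \<and>
     (\<forall>x\<in>S. \<forall>y\<in>topspace X. le x y \<longrightarrow> y \<in> S)"

definition down_of :: "'a topology \<Rightarrow> ('a \<Rightarrow> 'a \<Rightarrow> bool) \<Rightarrow> 'a set \<Rightarrow> 'a set" where
  "down_of X le S = {y \<in> topspace X. \<exists>x\<in>S. le y x}"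

definition minimals :: "('a \<Rightarrow> 'a \<Rightarrow> bool) \<Rightarrow> 'a set \<Rightarrow> 'a set" where
  "minimals le S = {x \<in> S. \<forall>y\<in>S. le y x \<longrightarrow> y = x}"

definition partial_order_in :: "'a set \<Rightarrow> ('a \<Rightarrow> 'a \<Rightarrow> bool) \<Rightarrow> bool" where
  "partial_order_in A le \<longleftrightarrow> (\<forall>x\<in>A. le x x) \<and>
     (\<forall>x\<in>A. \<forall>y\<in>A. le x y \<and> le y x \<longrightarrow> x = y) \<and>
     (\<forall>x\<in>A. \<forall>y\<in>A. \<forall>z\<in>A. le x y \<and> le y z \<longrightarrow> le x z)"

definition priestley_space :: "'a topology \<Rightarrow> ('a \<Rightarrow> 'a \<Rightarrow> bool) \<Rightarrow> bool" where
  "priestley_space X le \<longleftrightarrow> stone_space X \<and> partial_order_in (topspace X) le \<and>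
     (\<forall>x\<in>topspace X. \<forall>y\<in>topspace X. \<not> le x y \<longrightarrow>
        (\<exists>U. clopenin X U \<and> upset_in X le U \<and> x \<in> U \<and> y \<notin> U))"

definition L_space :: "'a topology \<Rightarrow> ('a \<Rightarrow> 'a \<Rightarrow> bool) \<Rightarrow> bool" where
  "L_space X le \<longleftrightarrow> priestley_space X le \<and>
     (\<forall>U. clopenin X U \<longrightarrow> clopenin X (down_of X le U)) \<and>
     (\<forall>U. openin X U \<and> upset_in X le U \<longrightarrow> openin X (X closure_of U))"

definition spatial_part :: "'a topology \<Rightarrow> ('a \<Rightarrow> 'a \<Rightarrow> bool) \<Rightarrow> 'a set" where
  "spatial_part X le = {y \<in> topspace X. clopenin X (down_of X le {y})}"

definition spatial_topology :: "'a topology \<Rightarrow> ('a \<Rightarrow> 'a \<Rightarrow> bool) \<Rightarrow> 'a topology" where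
  "spatial_topology X le = topology_generated_by
     {U \<inter> spatial_part X le | U. clopenin X U \<and> upset_in X le U}"

definition SL_space :: "'a topology \<Rightarrow> ('a \<Rightarrow> 'a \<Rightarrow> bool) \<Rightarrow> bool" where
  "SL_space X le \<longleftrightarrow> L_space X le \<and> X closure_of (spatial_part X le) = topspace X"

definition scott_upset :: "'a topology \<Rightarrow> ('a \<Rightarrow> 'a \<Rightarrow> bool) \<Rightarrow> 'a set \<Rightarrow> bool" where
  "scott_upset X le F \<longleftrightarrow> closedin X F \<and> upset_in X le F \<and>
     minimals le F \<subseteq> spatial_part X le"

end

theory Submission
  imports Defs
begin

lemma up_closed:
  assumes P: "priestley_space X le" and c: "c \<in> topspace X"
  shows "closedin X {y\<in>topspace X. le c y}"
proof -
  have "openin X (topspace X - {y\<in>topspace X. le c y})"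
  proof (subst openin_subopen, intro ballI)
    fix y assume y: "y \<in> topspace X - {y\<in>topspace X. le c y}"
    then obtain W where W: "clopenin X W" "upset_in X le W" "c \<in> W" "y \<notin> W"
      using P c unfolding priestley_space_def by blast
    show "\<exists>T. openin X T \<and> y \<in> T \<and> T \<subseteq> topspace X - {y\<in>topspace X. le c y}"
      apply (rule exI[of _ "topspace X - W"])
      using W y unfolding clopenin_def upset_in_def by auto
  qed
  then show ?thesis unfolding closedin_def by auto
qed

lemma down_closed:
  assumes P: "priestley_space X le" and c: "c \<in> topspace X"
  shows "closedin X {y\<in>topspace X. le y c}"
proof -
  have "openin X (topspace X - {y\<in>topspace X. le y c})"
  proof (subst openin_subopen, intro ballI)
    fix y assume y: "y \<in> topspace X - {y\<in>topspace X. le y c}"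
    then obtain W where W: "clopenin X W" "upset_in X le W" "y \<in> W" "c \<notin> W"
      using P c unfolding priestley_space_def by blast
    show "\<exists>T. openin X T \<and> y \<in> T \<and> T \<subseteq> topspace X - {y\<in>topspace X. le y c}"
      apply (rule exI[of _ "W"])
      using W y c unfolding clopenin_def upset_in_def by (auto dest: openin_subset)
  qed
  then show ?thesis unfolding closedin_def by auto
qed

lemma least_in_chain:
  assumes "finite C" "C \<noteq> {}" "\<forall>a\<in>C. \<forall>b\<in>C. le a b \<or> le b a" "C \<subseteq> A"
    and "partial_order_in A le"
  shows "\<exists>c0\<in>C. \<forall>c\<in>C. le c0 c"
  using assms
proof (induction C rule: finite_ne_induct)
  case (singleton x)
  then show ?case unfolding partial_order_in_def by auto
next
  case (insert x F)
  then obtain c0 where c0: "c0 \<in> F" "\<forall>c\<in>F. le c0 c" by auto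
  show ?case
  proof (cases "le x c0")
    case True
    then show ?thesis using insert c0 unfolding partial_order_in_def
      by (metis insert_iff subset_iff)
  next
    case False
    then have "le c0 x" using insert c0 by auto
    then show ?thesis using c0 by auto
  qed
qed

lemma exists_minimal:
  assumes P: "priestley_space X le" and F: "closedin X F" and z: "z \<in> F"
  shows "\<exists>m\<in>minimals le F. le m z"
proof -
  have po: "partial_order_in (topspace X) le" using P unfolding priestley_space_def by auto
  have Fsub: "F \<subseteq> topspace X" using F closedin_subset by auto
  have cs: "compact_space X" using P unfolding priestley_space_def stone_space_def by auto
  define S where "S = {a\<in>F. le a z}"
  have Sc: "closedin X S"
  proof -
    have "S = F \<inter> {y\<in>topspace X. le y z}" unfolding S_def using Fsub by auto
    then show ?thesis using closedin_Int[OF F down_closed[OF P]] z Fsub by auto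
  qed
  have zS: "z \<in> S" unfolding S_def using z Fsub po unfolding partial_order_in_def by auto
  have SX: "S \<subseteq> topspace X" unfolding S_def using Fsub by auto
  have "\<exists>m\<in>S. \<forall>a\<in>S. (\<lambda>a b. le b a) m a \<longrightarrow> a = m"
  proof (rule predicate_Zorn)
    show "partial_order_on S (relation_of (\<lambda>a b. le b a) S)"
    proof -
      have r: "\<forall>x\<in>S. le x x" "\<forall>x\<in>S. \<forall>y\<in>S. le x y \<and> le y x \<longrightarrow> x = y"
        "\<forall>x\<in>S. \<forall>y\<in>S. \<forall>w\<in>S. le x y \<and> le y w \<longrightarrow> le x w"
        using po SX unfolding partial_order_in_def by (meson subsetD)+
      show ?thesis unfolding partial_order_on_def preorder_on_def refl_on_def trans_def antisym_def
        relation_of_def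
      proof (intro conjI)
        show "\<forall>x\<in>S. (x, x) \<in> {(a, b). (a, b) \<in> S \<times> S \<and> le b a}" using r(1) by blast
        show "{(a, b). (a, b) \<in> S \<times> S \<and> le b a} \<subseteq> S \<times> S" by auto
        show "\<forall>x y z. (x, y) \<in> {(a, b). (a, b) \<in> S \<times> S \<and> le b a} \<longrightarrow>
          (y, z) \<in> {(a, b). (a, b) \<in> S \<times> S \<and> le b a} \<longrightarrow> (x, z) \<in> {(a, b). (a, b) \<in> S \<times> S \<and> le b a}"
          using r(3) by blast
        show "\<forall>x y. (x, y) \<in> {(a, b). (a, b) \<in> S \<times> S \<and> le b a} \<longrightarrow>
          (y, x) \<in> {(a, b). (a, b) \<in> S \<times> S \<and> le b a} \<longrightarrow> x = y"
          using r(2) by blast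
      qed
    qed
  next
    fix C assume C: "C \<in> Chains (relation_of (\<lambda>a b. le b a) S)"
    then have CS: "C \<subseteq> S" and Cch: "\<forall>a\<in>C. \<forall>b\<in>C. le a b \<or> le b a"
      unfolding Chains_def relation_of_def by auto
    show "\<exists>u\<in>S. \<forall>a\<in>C. le u a"
    proof (cases "C = {}")
      case True
      then show ?thesis using zS by auto
    next
      case False
      define UU where "UU = (\<lambda>c. {y\<in>topspace X. le y c} \<inter> S) ` C"
      have "\<Inter>UU \<noteq> {}"
      proof (rule compact_space_fip[THEN iffD1, OF cs, rule_format], intro conjI allI impI ballI)
        fix D assume "D \<in> UU"
        then show "closedin X D" unfolding UU_def using down_closed[OF P] Sc CS SX
          by (auto intro!: closedin_Int)
      next
        fix G assume G: "finite G \<and> G \<subseteq> UU"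
        then obtain C' where C': "C' \<subseteq> C" "finite C'" "G = (\<lambda>c. {y\<in>topspace X. le y c} \<inter> S) ` C'"
          unfolding UU_def by (meson finite_subset_image)
        show "\<Inter>G \<noteq> {}"
        proof (cases "C' = {}")
          case True then show ?thesis using C' by auto
        next
          case False
          obtain c0 where c0: "c0 \<in> C'" "\<forall>c\<in>C'. le c0 c"
            using least_in_chain[OF C'(2) False _ _ po] Cch C'(1) CS SX by blast
          have "c0 \<in> \<Inter>G" using C' c0 CS SX by auto
          then show ?thesis by auto
        qed
      qed
      then obtain u where u: "u \<in> \<Inter>UU" by auto
      obtain c where "c \<in> C" using False by auto
      then have "u \<in> S" using u unfolding UU_def by (auto split: if_splits)
      moreover have "\<forall>a\<in>C. le u a" using u False unfolding UU_def by (auto split: if_splits)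
      ultimately show ?thesis by auto
    qed
  qed
  then obtain m where m: "m \<in> S" "\<forall>a\<in>S. le a m \<longrightarrow> a = m" by auto
  have "m \<in> minimals le F"
    unfolding minimals_def
  proof (safe)
    show "m \<in> F" using m S_def by auto
  next
    fix y assume "y \<in> F" "le y m"
    moreover have "le m z" using m S_def by auto
    ultimately have "le y z" using po Fsub z m(1) SX unfolding partial_order_in_def by blast
    then show "y = m" using m \<open>y \<in> F\<close> \<open>le y m\<close> S_def by auto
  qed
  then show ?thesis using m S_def by auto
qed


lemma clopen_upset_Int:
  "clopenin X A \<and> upset_in X le A \<Longrightarrow> clopenin X B \<and> upset_in X le B \<Longrightarrow>
   clopenin X (A \<inter> B) \<and> upset_in X le (A \<inter> B)"
  unfolding clopenin_def upset_in_def by auto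

lemma clopen_upset_Un:
  "clopenin X A \<and> upset_in X le A \<Longrightarrow> clopenin X B \<and> upset_in X le B \<Longrightarrow>
   clopenin X (A \<union> B) \<and> upset_in X le (A \<union> B)"
  unfolding clopenin_def upset_in_def by auto

lemma gen_struct:
  assumes "generate_topology_on {W \<inter> Y | W. clopenin X W \<and> upset_in X le W} Ob"
  shows "Ob \<subseteq> Y \<and> (\<forall>x\<in>Ob. \<exists>W. clopenin X W \<and> upset_in X le W \<and> x \<in> W \<and> W \<inter> Y \<subseteq> Ob)"
  using assms
proof (induction rule: generate_topology_on.induct)
  case Empty
  then show ?case by auto
next
  case (Int a b)
  show ?case
  proof (intro conjI ballI)
    show "a \<inter> b \<subseteq> Y" using Int by auto
    fix x assume x: "x \<in> a \<inter> b"
    obtain W1 where W1: "clopenin X W1" "upset_in X le W1" "x \<in> W1" "W1 \<inter> Y \<subseteq> a"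
      using Int x by blast
    obtain W2 where W2: "clopenin X W2" "upset_in X le W2" "x \<in> W2" "W2 \<inter> Y \<subseteq> b"
      using Int x by blast
    show "\<exists>W. clopenin X W \<and> upset_in X le W \<and> x \<in> W \<and> W \<inter> Y \<subseteq> a \<inter> b"
      apply (rule exI[of _ "W1 \<inter> W2"])
      using clopen_upset_Int[of X W1 le W2] W1 W2 by auto
  qed
next
  case (UN K)
  show ?case
  proof (intro conjI ballI)
    show "\<Union>K \<subseteq> Y" using UN by auto
    fix x assume "x \<in> \<Union>K"
    then obtain k where k: "k \<in> K" "x \<in> k" by auto
    then obtain W where "clopenin X W" "upset_in X le W" "x \<in> W" "W \<inter> Y \<subseteq> k"
      using UN by blast
    then show "\<exists>W. clopenin X W \<and> upset_in X le W \<and> x \<in> W \<and> W \<inter> Y \<subseteq> \<Union>K"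
      using k by blast
  qed
next
  case (Basis s)
  then show ?case by auto
qed

lemma finite_union_rep:
  assumes "finite F" "\<forall>A\<in>F. \<exists>Z. P Z \<and> A = Z \<inter> Y" "P {}"
    "\<forall>A B. P A \<longrightarrow> P B \<longrightarrow> P (A \<union> B)"
  shows "\<exists>Z. P Z \<and> \<Union>F = Z \<inter> Y"
  using assms
proof (induction F rule: finite_induct)
  case empty
  then show ?case by auto
next
  case (insert A F)
  then obtain Z where Z: "P Z" "\<Union>F = Z \<inter> Y" by auto
  obtain Z' where Z': "P Z'" "A = Z' \<inter> Y" using insert by auto
  show ?case
    apply (rule exI[of _ "Z' \<union> Z"])
    using Z Z' insert.prems(3) Z'(1) Z(1) by auto
qed

theorem lemma4p10:
  fixes X :: "'a topology" and le :: "'a \<Rightarrow> 'a \<Rightarrow> bool" and U :: "'a set"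
  assumes "SL_space X le"
    and "U \<subseteq> topspace X"
  shows "(clopenin X U \<and> scott_upset X le U) \<longleftrightarrow>
         (\<exists>V. openin (spatial_topology X le) V \<and> compactin (spatial_topology X le) V
              \<and> X closure_of V = U)"
proof -
  define Y where "Y = spatial_part X le"
  define B where "B = {W \<inter> Y | W. clopenin X W \<and> upset_in X le W}"
  define T where "T = spatial_topology X le"
  have TB: "T = topology_generated_by B" unfolding T_def B_def Y_def spatial_topology_def by simp
  have P: "priestley_space X le" using assms(1) unfolding SL_space_def L_space_def by auto
  have po: "partial_order_in (topspace X) le" using P unfolding priestley_space_def by auto
  have cs: "compact_space X" using P unfolding priestley_space_def stone_space_def by auto
  have dense: "X closure_of Y = topspace X" using assms(1) unfolding SL_space_def Y_def by auto
  have YX: "Y \<subseteq> topspace X" unfolding Y_def spatial_part_def by auto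
  have topX: "clopenin X (topspace X) \<and> upset_in X le (topspace X)"
    unfolding clopenin_def upset_in_def by auto
  have topT: "topspace T = Y"
  proof -
    have "\<Union>B = Y" unfolding B_def using topX YX by blast
    then show ?thesis unfolding TB by simp
  qed
  have dens: "X closure_of (W \<inter> Y) = W" if "clopenin X W" for W
  proof -
    have "W \<subseteq> X closure_of Y" using that dense unfolding clopenin_def by (auto dest: openin_subset)
    then have "X closure_of (W \<inter> Y) = X closure_of W"
      using closure_of_openin_Int_superset that unfolding clopenin_def by blast
    then show ?thesis using that unfolding clopenin_def by (simp add: closure_of_closedin)
  qed
  have openB: "openin T (W \<inter> Y)" if "clopenin X W" "upset_in X le W" for W
    unfolding TB by (rule topology_generated_by_Basis) (use that B_def in auto)
  have struct: "Ob \<subseteq> Y \<and> (\<forall>x\<in>Ob. \<exists>W. clopenin X W \<and> upset_in X le W \<and> x \<in> W \<and> W \<inter> Y \<subseteq> Ob)"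
    if "openin T Ob" for Ob
    using gen_struct[of Y X le Ob] that unfolding TB B_def openin_topology_generated_by_iff by blast
  show ?thesis
    unfolding T_def[symmetric]
  proof
    assume L: "clopenin X U \<and> scott_upset X le U"
    then have Uup: "upset_in X le U" and Uc: "closedin X U" and Umin: "minimals le U \<subseteq> Y"
      unfolding scott_upset_def Y_def by auto
    define V where "V = U \<inter> Y"
    have "openin T V" unfolding V_def using openB L Uup by auto
    moreover have "X closure_of V = U" unfolding V_def using dens L by auto
    moreover have "compactin T V"
      unfolding compactin_def
    proof (intro conjI allI impI)
      show "V \<subseteq> topspace T" using topT V_def by auto
      fix UU assume UU: "(\<forall>Ob\<in>UU. openin T Ob) \<and> V \<subseteq> \<Union>UU"
      have "\<forall>x\<in>V. \<exists>W. clopenin X W \<and> upset_in X le W \<and> x \<in> W \<and> (\<exists>Ob\<in>UU. W \<inter> Y \<subseteq> Ob)"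
      proof
        fix x assume "x \<in> V"
        then obtain Ob where Ob: "Ob \<in> UU" "x \<in> Ob" using UU by auto
        then show "\<exists>W. clopenin X W \<and> upset_in X le W \<and> x \<in> W \<and> (\<exists>Ob\<in>UU. W \<inter> Y \<subseteq> Ob)"
          using struct[of Ob] UU by blast
      qed
      then obtain Wf where Wf: "\<forall>x\<in>V. clopenin X (Wf x) \<and> upset_in X le (Wf x) \<and> x \<in> Wf x \<and> (\<exists>Ob\<in>UU. Wf x \<inter> Y \<subseteq> Ob)"
        by metis
      then obtain Of where Of: "\<forall>x\<in>V. Of x \<in> UU \<and> Wf x \<inter> Y \<subseteq> Of x" by metis
      have cover: "U \<subseteq> \<Union>(Wf ` V)"
      proof
        fix z assume z: "z \<in> U"
        obtain m where m: "m \<in> minimals le U" "le m z" using exists_minimal[OF P Uc z] by auto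
        have mV: "m \<in> V" using m Umin V_def unfolding minimals_def by auto
        then have "z \<in> Wf m" using Wf m(2) z assms(2) unfolding upset_in_def by blast
        then show "z \<in> \<Union>(Wf ` V)" using mV by auto
      qed
      have "compactin X U" using closedin_compact_space[OF cs Uc] .
      then obtain FF where FF: "finite FF" "FF \<subseteq> Wf ` V" "U \<subseteq> \<Union>FF"
        unfolding compactin_def using cover Wf unfolding clopenin_def by (metis imageE)
      then obtain F0 where F0: "F0 \<subseteq> V" "finite F0" "FF = Wf ` F0"
        by (meson finite_subset_image)
      show "\<exists>F. finite F \<and> F \<subseteq> UU \<and> V \<subseteq> \<Union>F"
      proof (intro exI conjI)
        show "finite (Of ` F0)" using F0 by auto
        show "Of ` F0 \<subseteq> UU" using F0 Of by auto
        show "V \<subseteq> \<Union>(Of ` F0)"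
        proof
          fix v assume v: "v \<in> V"
          then obtain x where "x \<in> F0" "v \<in> Wf x" using FF F0 V_def by auto
          then show "v \<in> \<Union>(Of ` F0)" using Of F0 v V_def by blast
        qed
      qed
    qed
    ultimately show "\<exists>V. openin T V \<and> compactin T V \<and> X closure_of V = U" by blast
  next
    assume "\<exists>V. openin T V \<and> compactin T V \<and> X closure_of V = U"
    then obtain V where V: "openin T V" "compactin T V" "X closure_of V = U" by blast
    have VY: "V \<subseteq> Y" using V(1) openin_subset topT by auto
    define UU where "UU = {W \<inter> Y | W. clopenin X W \<and> upset_in X le W \<and> W \<inter> Y \<subseteq> V}"
    have "V \<subseteq> \<Union>UU"
    proof
      fix x assume "x \<in> V"
      then obtain W where "clopenin X W" "upset_in X le W" "x \<in> W" "W \<inter> Y \<subseteq> V"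
        using struct[OF V(1)] by blast
      then show "x \<in> \<Union>UU" unfolding UU_def using VY \<open>x \<in> V\<close> by blast
    qed
    moreover have "\<forall>Ob\<in>UU. openin T Ob" unfolding UU_def using openB by auto
    ultimately obtain FF where FF: "finite FF" "FF \<subseteq> UU" "V \<subseteq> \<Union>FF"
      using V(2) unfolding compactin_def by meson
    obtain W where W: "clopenin X W \<and> upset_in X le W" "\<Union>FF = W \<inter> Y"
    proof -
      have h1: "\<forall>A\<in>FF. \<exists>Z. (clopenin X Z \<and> upset_in X le Z) \<and> A = Z \<inter> Y"
        using FF(2) unfolding UU_def by blast
      have h2: "clopenin X {} \<and> upset_in X le {}" unfolding clopenin_def upset_in_def by auto
      have h3: "clopenin X (A \<union> B) \<and> upset_in X le (A \<union> B)"
        if "clopenin X A \<and> upset_in X le A" "clopenin X B \<and> upset_in X le B" for A B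
        using clopen_upset_Un[of X A le B] that by blast
      have h3': "\<forall>A B. clopenin X A \<and> upset_in X le A \<longrightarrow> clopenin X B \<and> upset_in X le B \<longrightarrow>
         clopenin X (A \<union> B) \<and> upset_in X le (A \<union> B)" using h3 by blast
      show ?thesis
        using finite_union_rep[of FF "\<lambda>Z. clopenin X Z \<and> upset_in X le Z" Y, OF FF(1) h1 h2 h3']
          that by (elim exE conjE) blast
    qed
    have "\<Union>FF \<subseteq> V" using FF(2) unfolding UU_def by auto
    then have VW: "V = W \<inter> Y" using FF(3) W(2) by auto
    then have UW: "U = W" using V(3) dens W(1) by auto
    have "minimals le W \<subseteq> Y"
    proof
      fix m assume m: "m \<in> minimals le W"
      show "m \<in> Y"
      proof (rule ccontr)
        assume mY: "m \<notin> Y"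
        have mX: "m \<in> topspace X" using m W(1) unfolding minimals_def upset_in_def by auto
        define UU' where "UU' = {Z \<inter> Y | Z. clopenin X Z \<and> upset_in X le Z \<and> m \<notin> Z}"
        have "V \<subseteq> \<Union>UU'"
        proof
          fix y assume y: "y \<in> V"
          then have yW: "y \<in> W" "y \<in> Y" using VW by auto
          have yX: "y \<in> topspace X" using yW YX by auto
          have "\<not> le y m" using m yW mY unfolding minimals_def by auto
          then obtain Z where "clopenin X Z" "upset_in X le Z" "y \<in> Z" "m \<notin> Z"
            using P yX mX unfolding priestley_space_def by blast
          then show "y \<in> \<Union>UU'" unfolding UU'_def using yW by blast
        qed
        moreover have "\<forall>Ob\<in>UU'. openin T Ob" unfolding UU'_def using openB by auto
        ultimately obtain FF' where FF': "finite FF'" "FF' \<subseteq> UU'" "V \<subseteq> \<Union>FF'"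
          using V(2) unfolding compactin_def by meson
        obtain Z where Z: "clopenin X Z \<and> upset_in X le Z \<and> m \<notin> Z" "\<Union>FF' = Z \<inter> Y"
        proof -
          have h1: "\<forall>A\<in>FF'. \<exists>Z. (clopenin X Z \<and> upset_in X le Z \<and> m \<notin> Z) \<and> A = Z \<inter> Y"
            using FF'(2) unfolding UU'_def by blast
          have h2: "clopenin X {} \<and> upset_in X le {} \<and> m \<notin> {}" unfolding clopenin_def upset_in_def by auto
          have h3: "clopenin X (A \<union> B) \<and> upset_in X le (A \<union> B) \<and> m \<notin> A \<union> B"
            if "clopenin X A \<and> upset_in X le A \<and> m \<notin> A" "clopenin X B \<and> upset_in X le B \<and> m \<notin> B" for A B
            using clopen_upset_Un[of X A le B] that by blast
          have h3': "\<forall>A B. (clopenin X A \<and> upset_in X le A \<and> m \<notin> A) \<longrightarrow> (clopenin X B \<and> upset_in X le B \<and> m \<notin> B) \<longrightarrow>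
             clopenin X (A \<union> B) \<and> upset_in X le (A \<union> B) \<and> m \<notin> A \<union> B" using h3 by blast
          show ?thesis
            using finite_union_rep[of FF' "\<lambda>Z. clopenin X Z \<and> upset_in X le Z \<and> m \<notin> Z" Y, OF FF'(1) h1 h2 h3']
              that by (elim exE conjE) blast
        qed
        have "V \<subseteq> Z" using FF'(3) Z(2) by auto
        then have "X closure_of V \<subseteq> Z" using Z(1) unfolding clopenin_def
          by (simp add: closure_of_minimal)
        then have "W \<subseteq> Z" using V(3) UW by auto
        then show False using m Z(1) unfolding minimals_def by auto
      qed
    qed
    then show "clopenin X U \<and> scott_upset X le U"
      using W(1) UW unfolding scott_upset_def Y_def clopenin_def by auto
  qed
qed

end
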